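(* There exist absolute constants $0<C_0<1/4$, $c>0$ and $N_0>0$ such that the following holds. Let $P$ be a set of $n$ points in $\mathbb{R}^2$ in general position, let $0<\epsilon<1$ with $\epsilon n\ge N_0$, let $0<\sigma\le 1$, let $r_0\ge 1$ be an integer, let $\Pi\subseteq\binom{P}{2}$, and put $\epsilon_0:=\sigma\epsilon/(100 r_0)$. Let $K$ be a convex set that is $(\epsilon,\sigma/2)$-restricted to $(P,\Pi)$, with witness set $P_K$ and $\Pi_K=\binom{P_K}{2}\cap\Pi$, and suppose that $K$ is not $(C_0\sigma\epsilon)$-crowded in $\Lambda(r_0)$. Then there is a slab $\tau\in\Lambda(r_0)$ (a middle slab for $K$) such that (M1) $\epsilon_0 n\le |P_K\cap\tau|\le C_0\sigma\epsilon n$, and (M2) at least $c\,\sigma\epsilon^2n^2/r_0$ edges of $\Pi_K$ cross $\tau$ transversally.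
   Context: General position: no three points of $P$ are collinear and no two lie on a common vertical line. $\binom{P}{2}$ denotes the set of segments spanned by pairs of points of $P$. A convex set $K$ is $(\epsilon,\sigma)$-restricted to $(P,\Pi)$ if $P\cap K$ contains a subset $P_K$ of exactly $\lceil\epsilon n\rceil$ points such that $\binom{P_K}{2}\cap\Pi$ contains at least $\sigma\binom{\lceil \epsilon n\rceil}{2}$ edges (one such $P_K$ is fixed as the witness set). For an integer $r\ge1$, ${\cal Y}(r)$ is a set of $r$ vertical lines, none through a point of $P$, such that each of the $r+1$ open vertical slabs of $\mathbb{R}^2\setminus\bigcup{\cal Y}(r)$ contains between $\lfloor n/(r+1)\rfloor$ and $\lceil n/(r+1)\rceil$ points of $P$; $\Lambda(r)$ is the collection of these slabs. $K$ is $\epsilon'$-crowded in $\Lambda(r)$ if some slab of $\Lambda(r)$ contains at least $\epsilon' n$ points of $P\cap K$. An edge $pq$ crosses a slab $\tau$ transversally if the segment $pq$ meets $\tau$ and neither $p$ nor $q$ lies in $\tau$. *)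

theory Defs
  imports "HOL-Analysis.Analysis"
begin

type_synonym pt = "real \<times> real"

definition general_position :: "pt set \<Rightarrow> bool" where
  "general_position P \<longleftrightarrow>
     (\<forall>p\<in>P. \<forall>q\<in>P. \<forall>s\<in>P. p \<noteq> q \<and> p \<noteq> s \<and> q \<noteq> s \<longrightarrow> \<not> collinear {p, q, s}) \<and>
     (\<forall>p\<in>P. \<forall>q\<in>P. p \<noteq> q \<longrightarrow> fst p \<noteq> fst q)"

definition pairs2 :: "pt set \<Rightarrow> pt set set" where
  "pairs2 P = {{p, q} | p q. p \<in> P \<and> q \<in> P \<and> p \<noteq> q}"

definition restricted_witness ::
  "real \<Rightarrow> real \<Rightarrow> pt set \<Rightarrow> pt set set \<Rightarrow> pt set \<Rightarrow> pt set \<Rightarrow> bool" where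
  "restricted_witness eps sg P EPi K PK \<longleftrightarrow>
     PK \<subseteq> P \<inter> K \<and> card PK = nat \<lceil>eps * real (card P)\<rceil> \<and>
     real (card (pairs2 PK \<inter> EPi)) \<ge> sg * real (nat \<lceil>eps * real (card P)\<rceil> choose 2)"

text \<open>Slab i (0 \<le> i \<le> r) determined by vertical lines x = y 1 < ... < x = y r.\<close>
definition slab :: "nat \<Rightarrow> (nat \<Rightarrow> real) \<Rightarrow> nat \<Rightarrow> pt set" where
  "slab r y i = {p. (0 < i \<longrightarrow> y i < fst p) \<and> (i < r \<longrightarrow> fst p < y (i + 1))}"

definition vertical_lines :: "pt set \<Rightarrow> nat \<Rightarrow> (nat \<Rightarrow> real) \<Rightarrow> bool" where
  "vertical_lines P r y \<longleftrightarrow>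
     strict_mono_on {1..r} y \<and>
     (\<forall>i\<in>{1..r}. \<forall>p\<in>P. fst p \<noteq> y i) \<and>
     (\<forall>i\<le>r. card P div (r + 1) \<le> card (P \<inter> slab r y i) \<and>
              real (card (P \<inter> slab r y i)) \<le> real_of_int \<lceil>real (card P) / real (r + 1)\<rceil>)"

definition crowded :: "real \<Rightarrow> pt set \<Rightarrow> nat \<Rightarrow> (nat \<Rightarrow> real) \<Rightarrow> pt set \<Rightarrow> bool" where
  "crowded eps' P r y K \<longleftrightarrow> (\<exists>i\<le>r. real (card (P \<inter> K \<inter> slab r y i)) \<ge> eps' * real (card P))"

definition crosses_transversally :: "pt set \<Rightarrow> pt set \<Rightarrow> bool" where
  "crosses_transversally e tau \<longleftrightarrow>
     (\<exists>p q. e = {p, q} \<and> closed_segment p q \<inter> tau \<noteq> {} \<and> p \<notin> tau \<and> q \<notin> tau)"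

end

theory Submission
  imports Defs
begin

lemma choose2_real: "real (m choose 2) = real m * (real m - 1) / 2"
proof (cases m)
  case 0 then show ?thesis by simp
next
  case (Suc k)
  have ev: "even (m * (m - 1))" by (cases "even m") (auto simp: Suc)
  have "real (m choose 2) = real (m * (m - 1) div 2)" by (simp only: choose_two)
  also have "\<dots> = real (m * (m - 1)) / 2" using ev by (simp add: real_of_nat_div)
  also have "\<dots> = real m * (real m - 1) / 2" using Suc by (simp add: of_nat_diff algebra_simps)
  finally show ?thesis .
qed

lemma slab_disj:
  assumes sm: "strict_mono_on {1..r} y" and "i \<le> r" "j \<le> r"
    and "p \<in> slab r y i" "p \<in> slab r y j"
  shows "i = j"
proof (rule ccontr)
  assume ne: "i \<noteq> j"
  have key: "False" if "a < b" "b \<le> r" "p \<in> slab r y a" "p \<in> slab r y b" for a b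
  proof -
    have "fst p < y (a+1)" using that unfolding slab_def by auto
    moreover have "y b < fst p" using that unfolding slab_def by auto
    moreover have "y (a+1) \<le> y b"
    proof (cases "a + 1 = b")
      case True then show ?thesis by simp
    next
      case False then show ?thesis using that strict_mono_onD[OF sm, of "a+1" b] by auto
    qed
    ultimately show False by linarith
  qed
  show False
  proof (cases "i < j")
    case True then show False using key[of i j] assms by blast
  next
    case False then have "j < i" using ne by linarith
    then show False using key[of j i] assms by blast
  qed
qed

lemma slab_cover:
  assumes "\<forall>i\<in>{1..r}. fst p \<noteq> y i"
  shows "\<exists>i\<le>r. p \<in> slab r y i"
proof -
  define T where "T = {0} \<union> {i\<in>{1..r}. y i < fst p}"
  define k where "k = Max T"
  have fT: "finite T" "T \<noteq> {}" unfolding T_def by auto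
  have kT: "k \<in> T" unfolding k_def using fT by simp
  have kr: "k \<le> r" using kT unfolding T_def by auto
  have "p \<in> slab r y k"
    unfolding slab_def
  proof (intro CollectI conjI impI)
    assume "0 < k" then show "y k < fst p" using kT unfolding T_def by auto
  next
    assume kr': "k < r"
    have "\<not> y (k+1) < fst p"
    proof
      assume "y (k+1) < fst p"
      then have "k+1 \<in> T" unfolding T_def using kr' by auto
      then have "k + 1 \<le> k" unfolding k_def using fT by simp
      then show False by simp
    qed
    moreover have "fst p \<noteq> y (k+1)" using assms kr' by auto
    ultimately show "fst p < y (k+1)" by linarith
  qed
  then show ?thesis using kr by blast
qed

lemma slab_cross:
  assumes sm: "strict_mono_on {1..r} y" and p: "p \<in> slab r y a" and q: "q \<in> slab r y b"
    and ah: "a < h" and hb: "h < b" and br: "b \<le> r"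
  shows "crosses_transversally {p, q} (slab r y h)"
proof -
  have mono: "y u \<le> y v" if "1 \<le> u" "u \<le> v" "v \<le> r" for u v
    using strict_mono_onD[OF sm, of u v] that by (cases "u = v") auto
  have fp: "fst p < y (a+1)" using p ah hb br unfolding slab_def by auto
  have fq: "y b < fst q" using q ah hb unfolding slab_def by auto
  have h1: "y (a+1) \<le> y h" using mono[of "a+1" h] ah hb br by auto
  have h2: "y (h+1) \<le> y b" using mono[of "h+1" b] ah hb br by auto
  have h3: "y h < y (h+1)" using strict_mono_onD[OF sm, of h "h+1"] ah hb br by auto
  define t where "t = (y h + y (h+1)) / 2"
  define u where "u = (t - fst p) / (fst q - fst p)"
  have d: "fst q - fst p > 0" using fp fq h1 h2 h3 by linarith
  have u0: "0 \<le> u" unfolding u_def t_def using d fp h1 h3 by (auto intro!: divide_nonneg_pos)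
  have u1: "u \<le> 1" unfolding u_def t_def using d fq h2 h3 by (simp add: divide_le_eq_1)
  define z where "z = (1 - u) *\<^sub>R p + u *\<^sub>R q"
  have zs: "z \<in> closed_segment p q" unfolding z_def in_segment using u0 u1 by blast
  have "fst z = fst p + u * (fst q - fst p)" unfolding z_def by (simp add: algebra_simps)
  also have "\<dots> = t" unfolding u_def using d by simp
  finally have fz: "fst z = t" .
  have "z \<in> slab r y h" unfolding slab_def using fz h3 unfolding t_def by auto
  moreover have "p \<notin> slab r y h" using slab_disj[OF sm, of a h p] p ah hb br by auto
  moreover have "q \<notin> slab r y h" using slab_disj[OF sm, of b h q] q ah hb br by auto
  ultimately show ?thesis unfolding crosses_transversally_def using zs by blast
qed

lemma main_lemma:
  fixes P :: "pt set" and eps sg :: real and r0 :: nat and EPi :: "pt set set" and K PK :: "pt set" and y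
  assumes fin: "finite P"
  and eps: "0 < eps" and N: "eps * real (card P) \<ge> 4"
  and sg: "0 < sg" "sg \<le> 1" and r0: "r0 \<ge> 1"
  and rw: "restricted_witness eps (sg / 2) P EPi K PK"
  and vl: "vertical_lines P r0 y"
  and nc: "\<not> crowded (1/100 * sg * eps) P r0 y K"
  shows "\<exists>i\<le>r0.
          sg * eps / (100 * real r0) * real (card P) \<le> real (card (PK \<inter> slab r0 y i)) \<and>
          real (card (PK \<inter> slab r0 y i)) \<le> 1/100 * sg * eps * real (card P) \<and>
          real (card {e \<in> pairs2 PK \<inter> EPi. crosses_transversally e (slab r0 y i)})
            \<ge> 1/20 * sg * eps^2 * (real (card P))^2 / real r0"
proof -
  define n where "n = card P"
  define X where "X = eps * real n"
  define m where "m = card PK"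
  define S where "S = slab r0 y"
  define E where "E = pairs2 PK \<inter> EPi"
  have X4: "X \<ge> 4" using N unfolding X_def n_def by simp
  have PKsub: "PK \<subseteq> P \<inter> K" and mdef: "m = nat \<lceil>X\<rceil>"
    and Ecard: "real (card E) \<ge> sg / 2 * real (m choose 2)"
    using rw unfolding restricted_witness_def E_def m_def X_def n_def by auto
  have finPK: "finite PK" using PKsub fin finite_subset by blast
  have mX: "real m \<ge> X" unfolding mdef using X4 by linarith
  have sm: "strict_mono_on {1..r0} y" using vl unfolding vertical_lines_def by auto
  have noline: "\<forall>i\<in>{1..r0}. \<forall>p\<in>P. fst p \<noteq> y i" using vl unfolding vertical_lines_def by auto
  have a_le: "real (card (PK \<inter> S i)) < sg * X / 100" if "i \<le> r0" for i
  proof -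
    have "card (PK \<inter> S i) \<le> card (P \<inter> K \<inter> S i)"
      by (rule card_mono) (use fin PKsub in auto)
    moreover have "real (card (P \<inter> K \<inter> S i)) < 1/100 * sg * eps * real n"
    proof -
      have "\<not> (real (card (P \<inter> K \<inter> slab r0 y i)) \<ge> 1/100 * sg * eps * real (card P))"
        using nc that unfolding crowded_def by blast
      then show ?thesis unfolding S_def n_def by simp
    qed
    ultimately show ?thesis unfolding X_def by simp
  qed
  have cover: "\<exists>i\<le>r0. p \<in> S i" if "p \<in> PK" for p
    using slab_cover[of r0 p y] noline that PKsub unfolding S_def by blast
  define sl where "sl p = (SOME i. i \<le> r0 \<and> p \<in> S i)" for p
  have sl: "sl p \<le> r0 \<and> p \<in> S (sl p)" if "p \<in> PK" for p
    unfolding sl_def using someI_ex[OF cover[OF that]] .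
  have sl_uniq: "sl p = i" if "p \<in> PK" "i \<le> r0" "p \<in> S i" for p i
    using slab_disj[OF sm, of "sl p" i p] sl[OF that(1)] that unfolding S_def by auto
  define H where "H = {i. i \<le> r0 \<and> sg * eps / (100 * real r0) * real n \<le> real (card (PK \<inter> S i))}"
  define L where "L = {p\<in>PK. sl p \<notin> H}"
  have finH: "finite H" unfolding H_def by auto
  have LPK: "L \<subseteq> PK" unfolding L_def by auto
  have finL: "finite L" using finPK LPK finite_subset by blast
  have Lcard: "real (card L) \<le> sg * X / 50"
  proof -
    have sub: "L \<subseteq> (\<Union>i\<in>{..r0} - H. PK \<inter> S i)"
      unfolding L_def using sl by auto
    have "card L \<le> card (\<Union>i\<in>{..r0} - H. PK \<inter> S i)"
      by (rule card_mono) (use finPK sub in auto)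
    also have "\<dots> \<le> (\<Sum>i\<in>{..r0} - H. card (PK \<inter> S i))" by (rule card_UN_le) auto
    finally have "real (card L) \<le> (\<Sum>i\<in>{..r0} - H. real (card (PK \<inter> S i)))"
      by (metis of_nat_le_iff of_nat_sum)
    also have "\<dots> \<le> real (card ({..r0} - H)) * (sg * X / (100 * real r0))"
      by (rule sum_bounded_above) (auto simp: H_def X_def)
    also have "\<dots> \<le> real (r0 + 1) * (sg * X / (100 * real r0))"
    proof (rule mult_right_mono)
      have "card ({..r0} - H) \<le> card {..r0}" by (rule card_mono) auto
      then show "real (card ({..r0} - H)) \<le> real (r0 + 1)" by simp
      show "0 \<le> sg * X / (100 * real r0)" using sg X4 by simp
    qed
    also have "\<dots> \<le> sg * X / 50"
    proof -
      have "real (r0 + 1) \<le> 2 * real r0" using r0 by simp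
      then have "real (r0 + 1) * (sg * X) \<le> 2 * real r0 * (sg * X)"
        by (rule mult_right_mono) (use sg X4 in simp)
      then show ?thesis using r0 by (simp add: field_simps)
    qed
    finally show ?thesis .
  qed
  define C where "C h = {e\<in>E. crosses_transversally e (S h)}" for h
  define G where "G = {e\<in>E. \<exists>h\<in>H. crosses_transversally e (S h)}"
  have finE: "finite E"
  proof -
    have "pairs2 PK \<subseteq> Pow PK" unfolding pairs2_def by auto
    then show ?thesis unfolding E_def using finPK by (meson finite_Int finite_Pow_iff finite_subset)
  qed
  define N where "N p = {q\<in>PK. p \<in> L \<or> q \<in> L \<or> \<not> (\<exists>h\<in>H. (sl p < h \<and> h < sl q) \<or> (sl q < h \<and> h < sl p))}" for p
  have bad_sub: "E - G \<subseteq> (\<lambda>(p,q). {p,q}) ` Sigma PK N"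
  proof
    fix e assume e: "e \<in> E - G"
    then obtain p q where epq: "e = {p,q}" "p \<in> PK" "q \<in> PK"
      unfolding E_def pairs2_def by auto
    have "q \<in> N p"
    proof (rule ccontr)
      assume "q \<notin> N p"
      then obtain h where h: "h \<in> H" "(sl p < h \<and> h < sl q) \<or> (sl q < h \<and> h < sl p)"
        unfolding N_def using epq by auto
      have "crosses_transversally e (S h)"
        using h(2)
      proof (elim disjE)
        assume "sl p < h \<and> h < sl q"
        then show ?thesis using slab_cross[OF sm, of p "sl p" q "sl q" h] sl epq
          unfolding S_def by auto
      next
        assume "sl q < h \<and> h < sl p"
        then show ?thesis using slab_cross[OF sm, of q "sl q" p "sl p" h] sl epq
          unfolding S_def by (auto simp: insert_commute)
      qed
      then have "e \<in> G" using e h unfolding G_def by auto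
      then show False using e by auto
    qed
    then show "e \<in> (\<lambda>(p,q). {p,q}) ` Sigma PK N" using epq by force
  qed
  have finN: "finite (N p)" for p unfolding N_def using finPK by auto
  have card_bad: "real (card (E - G)) \<le> (\<Sum>p\<in>PK. real (card (N p)))"
  proof -
    have "card (E - G) \<le> card ((\<lambda>(p,q). {p,q}) ` Sigma PK N)"
      by (rule card_mono) (use finPK finN bad_sub in auto)
    also have "\<dots> \<le> card (Sigma PK N)" by (rule card_image_le) (use finPK finN in auto)
    also have "\<dots> = (\<Sum>p\<in>PK. card (N p))" using finPK finN by (simp add: card_SigmaI)
    finally show ?thesis by (metis of_nat_le_iff of_nat_sum)
  qed
  have N_bound: "real (card (N p)) \<le> (if p \<in> L then real m else 0) + real (card L) + 3 * (sg * X / 100)"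
    if p: "p \<in> PK" for p
  proof (cases "p \<in> L")
    case True
    have "card (N p) \<le> m" unfolding m_def by (rule card_mono) (use finPK N_def in auto)
    then have "real (card (N p)) \<le> real m" by simp
    moreover have "0 \<le> sg * X" using sg X4 by simp
    ultimately show ?thesis using True by simp
  next
    case False
    define A where "A = {j\<in>H. \<not> (\<exists>h\<in>H. (sl p < h \<and> h < j) \<or> (j < h \<and> h < sl p))}"
    define U where "U = {h\<in>H. sl p < h}"
    define D where "D = {h\<in>H. h < sl p}"
    have finU: "finite U" "finite D" unfolding U_def D_def using finH by auto
    have Asub: "A \<subseteq> {sl p, Min U, Max D}"
    proof
      fix j assume j: "j \<in> A"
      consider "j = sl p" | "sl p < j" | "j < sl p" by linarith
      then show "j \<in> {sl p, Min U, Max D}"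
      proof cases
        case 1 then show ?thesis by simp
      next
        case 2
        then have jU: "j \<in> U" using j unfolding A_def U_def by auto
        then have "Min U \<le> j" "Min U \<in> U" using finU Min_le Min_in by blast+
        moreover have "\<not> Min U < j" using j \<open>Min U \<in> U\<close> unfolding A_def U_def by auto
        ultimately show ?thesis by simp
      next
        case 3
        then have jD: "j \<in> D" using j unfolding A_def D_def by auto
        then have "j \<le> Max D" "Max D \<in> D" using finU Max_ge Max_in by blast+
        moreover have "\<not> j < Max D" using j \<open>Max D \<in> D\<close> unfolding A_def D_def by auto
        ultimately show ?thesis by simp
      qed
    qed
    have cardA: "card A \<le> 3"
    proof -
      have "card A \<le> card {sl p, Min U, Max D}" by (rule card_mono) (use Asub in auto)
      also have "\<dots> \<le> 3" by (simp add: card_insert_if)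
      finally show ?thesis .
    qed
    have finA: "finite A" using finH unfolding A_def by auto
    have AH: "A \<subseteq> {..r0}" unfolding A_def H_def by auto
    have Nsub: "N p \<subseteq> L \<union> (\<Union>j\<in>A. PK \<inter> S j)"
    proof
      fix q assume q: "q \<in> N p"
      show "q \<in> L \<union> (\<Union>j\<in>A. PK \<inter> S j)"
      proof (cases "q \<in> L")
        case True then show ?thesis by simp
      next
        case qL: False
        have qPK: "q \<in> PK" using q unfolding N_def by auto
        have "sl q \<in> A" using q qL False qPK unfolding N_def A_def L_def by auto
        then show ?thesis using sl[OF qPK] qPK by auto
      qed
    qed
    have "card (N p) \<le> card (L \<union> (\<Union>j\<in>A. PK \<inter> S j))"
      by (rule card_mono) (use finL finA finPK Nsub in auto)
    also have "\<dots> \<le> card L + card (\<Union>j\<in>A. PK \<inter> S j)" by (rule card_Un_le)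
    also have "card (\<Union>j\<in>A. PK \<inter> S j) \<le> (\<Sum>j\<in>A. card (PK \<inter> S j))" by (rule card_UN_le) (use finA in auto)
    finally have "real (card (N p)) \<le> real (card L) + (\<Sum>j\<in>A. real (card (PK \<inter> S j)))"
      by (metis add_left_mono le_trans of_nat_add of_nat_le_iff of_nat_sum)
    also have "(\<Sum>j\<in>A. real (card (PK \<inter> S j))) \<le> real (card A) * (sg * X / 100)"
      by (rule sum_bounded_above) (use a_le AH in \<open>auto intro: less_imp_le\<close>)
    also have "\<dots> \<le> 3 * (sg * X / 100)"
      by (rule mult_right_mono) (use cardA sg X4 in auto)
    finally show ?thesis using False by simp
  qed
  have bad: "real (card (E - G)) \<le> 7 * real m * sg * X / 100"
  proof -
    have "real (card (E - G)) \<le> (\<Sum>p\<in>PK. (if p \<in> L then real m else 0) + real (card L) + 3 * (sg * X / 100))"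
      using card_bad sum_mono[of PK "\<lambda>p. real (card (N p))", OF N_bound] by linarith
    also have "\<dots> = real (card L) * real m + real m * (real (card L) + 3 * (sg * X / 100))"
    proof -
      have "(\<Sum>p\<in>PK. (if p \<in> L then real m else 0)) = real (card L) * real m"
        using finPK LPK by (simp add: sum.If_cases Int_absorb1 Int_def[symmetric])
      then show ?thesis by (simp add: sum.distrib m_def algebra_simps)
    qed
    also have "\<dots> \<le> (sg * X / 50) * real m + real m * (sg * X / 50 + 3 * (sg * X / 100))"
      using Lcard by (intro add_mono mult_right_mono mult_left_mono) auto
    also have "\<dots> = 7 * real m * sg * X / 100" by (simp add: field_simps)
    finally show ?thesis .
  qed
  have GE: "G \<subseteq> E" unfolding G_def by auto
  have cardEG: "card E = card G + card (E - G)"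
    using card_Diff_subset[OF finite_subset[OF GE finE] GE] card_mono[OF finE GE] by simp
  have m4: "real m \<ge> 4" using mX X4 by linarith
  have good: "real (card G) \<ge> sg * X^2 / 10"
  proof -
    have c2: "real (m choose 2) = real m * (real m - 1) / 2" by (rule choose2_real)
    have "real (card G) = real (card E) - real (card (E - G))" using cardEG by simp
    also have "\<dots> \<ge> sg / 2 * (real m * (real m - 1) / 2) - 7 * real m * sg * X / 100"
      using Ecard[unfolded c2] bad by linarith
    finally have g1: "real (card G) \<ge> sg / 2 * (real m * (real m - 1) / 2) - 7 * real m * sg * X / 100" .
    have "7 * real m * sg * X / 100 \<le> 7 * real m * sg * real m / 100"
      using mX sg m4 by (intro divide_right_mono mult_left_mono) auto
    moreover have "sg / 2 * (real m * (real m - 1) / 2) - 7 * real m * sg * real m / 100 \<ge> sg * (real m)^2 / 10"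
    proof -
      have "sg * (real m * (8 * real m - 25)) \<ge> 0" using sg m4 by (intro mult_nonneg_nonneg) auto
      then show ?thesis by (simp add: field_simps power2_eq_square)
    qed
    moreover have "sg * X^2 / 10 \<le> sg * (real m)^2 / 10"
      using sg mX X4 by (intro divide_right_mono mult_left_mono power_mono) auto
    ultimately show ?thesis using g1 by linarith
  qed
  have finC: "finite (C h)" for h unfolding C_def using finE by auto
  have GU: "G \<subseteq> (\<Union>h\<in>H. C h)" unfolding G_def C_def by auto
  have "card G \<le> card (\<Union>h\<in>H. C h)" by (rule card_mono) (use finH finC GU in auto)
  also have "\<dots> \<le> (\<Sum>h\<in>H. card (C h))" by (rule card_UN_le) (use finH in auto)
  finally have GS: "card G \<le> (\<Sum>h\<in>H. card (C h))" .
  have Gpos: "real (card G) > 0" proof -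
    have "sg * X^2 / 10 > 0" using sg X4 by simp
    then show ?thesis using good by linarith
  qed
  have Hne: "H \<noteq> {}" using GS Gpos by auto
  obtain h where h: "h \<in> H" "\<forall>h'\<in>H. card (C h') \<le> card (C h)"
  proof -
    define M where "M = Max ((\<lambda>h. card (C h)) ` H)"
    have "M \<in> (\<lambda>h. card (C h)) ` H" unfolding M_def using finH Hne by (intro Max_in) auto
    then obtain h where "h \<in> H" "card (C h) = M" by auto
    moreover have "\<forall>h'\<in>H. card (C h') \<le> M" unfolding M_def using finH by auto
    ultimately show ?thesis using that by auto
  qed
  have "card G \<le> card H * card (C h)"
    using GS sum_bounded_above[of H "\<lambda>h. card (C h)" "card (C h)"] h by auto
  also have "card H \<le> r0 + 1"
  proof -
    have "card H \<le> card {..r0}" by (rule card_mono) (auto simp: H_def)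
    then show ?thesis by simp
  qed
  then have "card H * card (C h) \<le> (r0 + 1) * card (C h)" by (rule mult_right_mono) simp
  finally have "real (card G) \<le> real (r0 + 1) * real (card (C h))" by (metis of_nat_le_iff of_nat_mult)
  also have "\<dots> \<le> 2 * real r0 * real (card (C h))"
    using r0 by (intro mult_right_mono) auto
  finally have Ch: "sg * X^2 / 10 \<le> 2 * real r0 * real (card (C h))" using good by linarith
  have hr: "h \<le> r0" "sg * eps / (100 * real r0) * real n \<le> real (card (PK \<inter> S h))" using h unfolding H_def by auto
  have up: "real (card (PK \<inter> S h)) \<le> 1/100 * sg * eps * real n" using a_le[OF hr(1)] unfolding X_def by simp
  have low: "1/20 * sg * eps^2 * (real n)^2 / real r0 \<le> real (card (C h))"
  proof -
    have "1/20 * sg * eps^2 * (real n)^2 / real r0 = sg * X^2 / 10 / (2 * real r0)"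
      unfolding X_def by (simp add: power_mult_distrib field_simps)
    also have "\<dots> \<le> real (card (C h))" using Ch r0 by (simp add: divide_le_eq algebra_simps)
    finally show ?thesis .
  qed
  show ?thesis
    using hr up low unfolding C_def E_def S_def n_def by blast
qed

theorem mainTheorem5:
  "\<exists>C0 c N0 :: real. 0 < C0 \<and> C0 < 1/4 \<and> 0 < c \<and> 0 < N0 \<and>
    (\<forall>(P :: pt set) eps sg (r0 :: nat) EPi K PK y.
       finite P \<and> general_position P \<and>
       0 < eps \<and> eps < 1 \<and> eps * real (card P) \<ge> N0 \<and>
       0 < sg \<and> sg \<le> 1 \<and> r0 \<ge> 1 \<and>
       EPi \<subseteq> pairs2 P \<and> convex K \<and>
       restricted_witness eps (sg / 2) P EPi K PK \<and>
       vertical_lines P r0 y \<and>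
       \<not> crowded (C0 * sg * eps) P r0 y K
     \<longrightarrow>
       (\<exists>i\<le>r0.
          sg * eps / (100 * real r0) * real (card P) \<le> real (card (PK \<inter> slab r0 y i)) \<and>
          real (card (PK \<inter> slab r0 y i)) \<le> C0 * sg * eps * real (card P) \<and>
          real (card {e \<in> pairs2 PK \<inter> EPi. crosses_transversally e (slab r0 y i)})
            \<ge> c * sg * eps^2 * (real (card P))^2 / real r0))"
  apply (rule exI[of _ "1/100"], rule exI[of _ "1/20"], rule exI[of _ 4])
  apply (intro conjI)
      apply simp
     apply simp
    apply simp
   apply simp
  apply (intro allI impI)
  apply (elim conjE)
  apply (rule main_lemma)
          apply assumption+
  done

end
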